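(* Let $\mathcal Y\subset\mathbb R^d$ be finite with no element a strict convex combination of others, $Y$ the matrix with columns $y\in\mathcal Y$, $\varepsilon>0$, and $\mathbf Z$ a centred random variable on $\mathbb R^d$ whose distribution belongs to an exponential family with positive density (typically standard multivariate normal). Define $F_{\varepsilon,\mathcal C}(\theta)=\mathbb E[\max_{y\in\mathcal Y}(\theta+\varepsilon\mathbf Z)^\top y]$ for $\theta\in\mathbb R^d$ and $F_{\varepsilon,\Delta}(s)=\mathbb E[\max_{y\in\mathcal Y}s(y)+\varepsilon\mathbf Z^\top y]$ for $s\in\mathbb R^{\mathcal Y}$, and let $\Omega_{\varepsilon,\mathcal C}=F^*_{\varepsilon,\mathcal C}$ and $\Omega_{\varepsilon,\Delta}=F^*_{\varepsilon,\Delta}$ be their Fenchel conjugates. Then for every $\mu\in\mathbb R^d$, $$\Omega_{\varepsilon,\mathcal C}(\mu)=\inf\{\Omega_{\varepsilon,\Delta}(q): q\in\mathbb R^{\mathcal Y},\ Yq=\mu\}.$$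
   Context: $\mathbb R^{\mathcal Y}$ denotes vectors indexed by $\mathcal Y$ with components $s(y)$; the infimum over an empty set is $+\infty$. *)

theory Defs
  imports "HOL-Probability.Probability"
begin

definition F_C :: "'a measure \<Rightarrow> ('a \<Rightarrow> real^'d) \<Rightarrow> real \<Rightarrow> (real^'d) set \<Rightarrow> real^'d \<Rightarrow> real" where
  "F_C M Z eps Ys \<theta> = prob_space.expectation M (\<lambda>\<omega>. Max ((\<lambda>y. (\<theta> + eps *\<^sub>R Z \<omega>) \<bullet> y) ` Ys))"

text \<open>Perturbed max over the simplex: F_{eps,Delta}(s) = E[max_{y in Y} s(y) + eps Z^T y],
  with s in R^Y represented as a function on (real^'d) (values outside Y are irrelevant).\<close>
definition F_Delta :: "'a measure \<Rightarrow> ('a \<Rightarrow> real^'d) \<Rightarrow> real \<Rightarrow> (real^'d) set \<Rightarrow> (real^'d \<Rightarrow> real) \<Rightarrow> real" where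
  "F_Delta M Z eps Ys s = prob_space.expectation M (\<lambda>\<omega>. Max ((\<lambda>y. s y + eps * (Z \<omega> \<bullet> y)) ` Ys))"

definition conj_vec :: "(real^'d \<Rightarrow> real) \<Rightarrow> real^'d \<Rightarrow> ereal" where
  "conj_vec F \<mu> = (SUP \<theta>. ereal (\<theta> \<bullet> \<mu> - F \<theta>))"

definition conj_fun :: "(real^'d) set \<Rightarrow> ((real^'d \<Rightarrow> real) \<Rightarrow> real) \<Rightarrow> (real^'d \<Rightarrow> real) \<Rightarrow> ereal" where
  "conj_fun Ys G q = (SUP s. ereal ((\<Sum>y\<in>Ys. s y * q y) - G s))"

definition Ymat :: "(real^'d) set \<Rightarrow> (real^'d \<Rightarrow> real) \<Rightarrow> real^'d" where
  "Ymat Ys q = (\<Sum>y\<in>Ys. q y *\<^sub>R y)"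

end

theory Submission
  imports Defs
begin


definition vadd :: "('b \<Rightarrow> real) \<Rightarrow> ('b \<Rightarrow> real) \<Rightarrow> ('b \<Rightarrow> real)" where
  "vadd a b = (\<lambda>x. a x + b x)"
definition vsc :: "real \<Rightarrow> ('b \<Rightarrow> real) \<Rightarrow> ('b \<Rightarrow> real)" where
  "vsc c a = (\<lambda>x. c * a x)"

definition good :: "(('b \<Rightarrow> real) \<Rightarrow> real) \<Rightarrow> real \<Rightarrow> ('b \<Rightarrow> real) set \<Rightarrow> (('b \<Rightarrow> real) \<Rightarrow> real) \<Rightarrow> bool" where
  "good G c0 L \<phi> \<longleftrightarrow> (\<lambda>x. 0) \<in> L \<and>
     (\<forall>a\<in>L. \<forall>b\<in>L. vadd a b \<in> L \<and> \<phi> (vadd a b) = \<phi> a + \<phi> b) \<and>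
     (\<forall>a\<in>L. \<forall>c. vsc c a \<in> L \<and> \<phi> (vsc c a) = c * \<phi> a) \<and>
     (\<forall>a\<in>L. \<phi> a + c0 \<le> G a)"

definition cvx :: "(('b \<Rightarrow> real) \<Rightarrow> real) \<Rightarrow> bool" where
  "cvx G \<longleftrightarrow> (\<forall>a b u. 0 \<le> u \<longrightarrow> u \<le> 1 \<longrightarrow> G (vadd (vsc u a) (vsc (1-u) b)) \<le> u * G a + (1-u) * G b)"

lemma hb_step:
  assumes cv: "cvx G" and gd: "good G c0 L \<phi>"
  shows "\<exists>L' \<phi>'. good G c0 L' \<phi>' \<and> L \<subseteq> L' \<and> e \<in> L' \<and> (\<forall>a\<in>L. \<phi>' a = \<phi> a)"
proof (cases "e \<in> L")
  case True then show ?thesis using gd by (intro exI[of _ L] exI[of _ \<phi>]) simp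
next
  case eL: False
  have z: "(\<lambda>x. 0) \<in> L" and add: "\<And>a b. a \<in> L \<Longrightarrow> b \<in> L \<Longrightarrow> vadd a b \<in> L \<and> \<phi> (vadd a b) = \<phi> a + \<phi> b"
    and sc: "\<And>a c. a \<in> L \<Longrightarrow> vsc c a \<in> L \<and> \<phi> (vsc c a) = c * \<phi> a"
    and dom: "\<And>a. a \<in> L \<Longrightarrow> \<phi> a + c0 \<le> G a"
    using gd unfolding good_def by auto
  have cvG: "\<And>a b u. 0 \<le> u \<Longrightarrow> u \<le> 1 \<Longrightarrow> G (vadd (vsc u a) (vsc (1-u) b)) \<le> u * G a + (1-u) * G b"
    using cv unfolding cvx_def by blast
  define Lo where "Lo = {(\<phi> t + c0 - G (vadd t (vsc (-c) e))) / c | t c. t \<in> L \<and> c > 0}"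
  define U where "U = {(G (vadd t (vsc c e)) - c0 - \<phi> t) / c | t c. t \<in> L \<and> c > 0}"
  have key: "l \<le> u" if lLo: "l \<in> Lo" and uU: "u \<in> U" for l u
  proof -
    obtain t1 c1 where t1: "t1 \<in> L" "c1 > 0" and l: "l = (\<phi> t1 + c0 - G (vadd t1 (vsc (-c1) e))) / c1"
      using lLo unfolding Lo_def by blast
    obtain t2 c2 where t2: "t2 \<in> L" "c2 > 0" and u: "u = (G (vadd t2 (vsc c2 e)) - c0 - \<phi> t2) / c2"
      using uU unfolding U_def by blast
    define w where "w = vsc (1/(c1+c2)) (vadd (vsc c2 t1) (vsc c1 t2))"
    have m1: "vsc c2 t1 \<in> L" "\<phi> (vsc c2 t1) = c2 * \<phi> t1" using sc t1 by auto
    have m2: "vsc c1 t2 \<in> L" "\<phi> (vsc c1 t2) = c1 * \<phi> t2" using sc t2 by auto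
    have m3: "vadd (vsc c2 t1) (vsc c1 t2) \<in> L" "\<phi> (vadd (vsc c2 t1) (vsc c1 t2)) = c2 * \<phi> t1 + c1 * \<phi> t2"
      using add[OF m1(1) m2(1)] m1 m2 by auto
    have wL: "w \<in> L" and pw0: "\<phi> w = 1/(c1+c2) * (c2 * \<phi> t1 + c1 * \<phi> t2)"
      using sc[OF m3(1)] m3(2) unfolding w_def by auto
    have pw: "\<phi> w = (c2 * \<phi> t1 + c1 * \<phi> t2) / (c1 + c2)" using pw0 by simp
    define a where "a = c2 / (c1 + c2)"
    have a01: "0 \<le> a" "a \<le> 1" using t1 t2 unfolding a_def by auto
    have s: "c1 + c2 > 0" using t1 t2 by simp
    define k where "k = 1 / (c1 + c2)"
    have a0: "a = c2 * k" unfolding a_def k_def by simp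
    have a1: "1 - a = c1 * k" unfolding a_def k_def using s by (simp add: field_simps)
    have kk: "(c1 + c2) * k = 1" unfolding k_def using s by simp
    have pwk: "\<phi> w = k * (c2 * \<phi> t1 + c1 * \<phi> t2)" using pw0 unfolding k_def by simp
    have "vadd (vsc a (vadd t1 (vsc (-c1) e))) (vsc (1-a) (vadd t2 (vsc c2 e))) = w"
    proof (rule ext)
      fix x
      have "a * (t1 x + - c1 * e x) + (1 - a) * (t2 x + c2 * e x) = k * (c2 * t1 x + c1 * t2 x)"
      proof -
        have "a * (t1 x + - c1 * e x) + (1 - a) * (t2 x + c2 * e x) = c2 * k * (t1 x + - c1 * e x) + c1 * k * (t2 x + c2 * e x)"
          by (subst a1, subst a0, rule refl)
        also have "\<dots> = k * (c2 * t1 x + c1 * t2 x)" by (simp add: algebra_simps)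
        finally show ?thesis .
      qed
      then show "vadd (vsc a (vadd t1 (vsc (-c1) e))) (vsc (1-a) (vadd t2 (vsc c2 e))) x = w x"
        unfolding w_def vadd_def vsc_def k_def by simp
    qed
    then have "G w \<le> a * G (vadd t1 (vsc (-c1) e)) + (1-a) * G (vadd t2 (vsc c2 e))"
      using cvG[OF a01, of "vadd t1 (vsc (-c1) e)" "vadd t2 (vsc c2 e)"] by simp
    also have "\<dots> = k * (c2 * G (vadd t1 (vsc (-c1) e)) + c1 * G (vadd t2 (vsc c2 e)))"
      by (subst a1, subst a0) (simp add: algebra_simps)
    finally have Gw: "G w \<le> k * (c2 * G (vadd t1 (vsc (-c1) e)) + c1 * G (vadd t2 (vsc c2 e)))" .
    have "\<phi> w + c0 \<le> G w" using dom wL by blast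
    then have A: "k * (c2 * \<phi> t1 + c1 * \<phi> t2) + c0 \<le> k * (c2 * G (vadd t1 (vsc (-c1) e)) + c1 * G (vadd t2 (vsc c2 e)))"
      using Gw pwk by simp
    have "(c1 + c2) * (k * (c2 * \<phi> t1 + c1 * \<phi> t2) + c0) \<le> (c1 + c2) * (k * (c2 * G (vadd t1 (vsc (-c1) e)) + c1 * G (vadd t2 (vsc c2 e))))"
      using A s by (intro mult_left_mono) auto
    also have "(c1 + c2) * (k * (c2 * G (vadd t1 (vsc (-c1) e)) + c1 * G (vadd t2 (vsc c2 e)))) = ((c1 + c2) * k) * (c2 * G (vadd t1 (vsc (-c1) e)) + c1 * G (vadd t2 (vsc c2 e)))"
      by (simp only: mult.assoc)
    also have "(c1 + c2) * (k * (c2 * \<phi> t1 + c1 * \<phi> t2) + c0) = ((c1 + c2) * k) * (c2 * \<phi> t1 + c1 * \<phi> t2) + (c1 + c2) * c0"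
      by (simp add: algebra_simps)
    finally have "c2 * \<phi> t1 + c1 * \<phi> t2 + c0 * (c1 + c2) \<le>
        c2 * G (vadd t1 (vsc (-c1) e)) + c1 * G (vadd t2 (vsc c2 e))"
      unfolding kk by (simp add: algebra_simps)
    then show ?thesis unfolding l u using t1 t2 by (simp add: field_simps)
  qed
  have zadd: "vadd t (vsc 0 e) = t" for t unfolding vadd_def vsc_def by simp
  have U0: "(G (vadd (\<lambda>x. 0) (vsc 1 e)) - c0 - \<phi> (\<lambda>x. 0)) / 1 \<in> U"
    unfolding U_def using z by (intro CollectI exI[of _ "\<lambda>x. 0"] exI[of _ "1::real"]) simp
  have Lo0: "(\<phi> (\<lambda>x. 0) + c0 - G (vadd (\<lambda>x. 0) (vsc (-1) e))) / 1 \<in> Lo"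
    unfolding Lo_def using z by (intro CollectI exI[of _ "\<lambda>x. 0"] exI[of _ "1::real"]) simp
  define \<alpha> where "\<alpha> = Sup Lo"
  have bdd: "bdd_above Lo" by (rule bdd_aboveI) (rule key[OF _ U0])
  have al1: "l \<le> \<alpha>" if "l \<in> Lo" for l unfolding \<alpha>_def using bdd that by (rule cSup_upper[rotated])
  have al2: "\<alpha> \<le> u" if "u \<in> U" for u unfolding \<alpha>_def
  proof (rule cSup_least)
    show "Lo \<noteq> {}" using Lo0 by blast
    show "l \<le> u" if "l \<in> Lo" for l using key[OF that \<open>u \<in> U\<close>] .
  qed
  have uniq: "t1 = t2 \<and> c1 = c2" if "t1 \<in> L" "t2 \<in> L" "vadd t1 (vsc c1 e) = vadd t2 (vsc c2 e)" for t1 t2 c1 c2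
  proof -
    have pt: "t1 x + c1 * e x = t2 x + c2 * e x" for x
      using fun_cong[OF that(3), of x] unfolding vadd_def vsc_def by simp
    have "c1 = c2"
    proof (rule ccontr)
      assume ne: "c1 \<noteq> c2"
      have "e = vsc (1/(c1-c2)) (vadd t2 (vsc (-1) t1))"
      proof (rule ext)
        fix x
        have h: "(c1 - c2) * e x = t2 x - t1 x" using pt[of x] by (simp add: algebra_simps)
        have ne': "c1 - c2 \<noteq> 0" using ne by simp
        have "e x = (t2 x - t1 x) / (c1 - c2)" using h ne' by (simp add: field_simps)
        then show "e x = vsc (1/(c1-c2)) (vadd t2 (vsc (-1) t1)) x"
          unfolding vadd_def vsc_def by simp
      qed
      moreover have "vsc (1/(c1-c2)) (vadd t2 (vsc (-1) t1)) \<in> L"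
        using sc[OF add[OF that(2) conjunct1[OF sc[OF that(1)]], THEN conjunct1]] by simp
      ultimately show False using eL by simp
    qed
    moreover then have "t1 = t2" using pt by (intro ext) simp
    ultimately show ?thesis by simp
  qed
  define L' where "L' = {vadd t (vsc c e) | t c. t \<in> L}"
  define \<phi>' where "\<phi>' w = (let p = (SOME p. fst p \<in> L \<and> w = vadd (fst p) (vsc (snd p) e)) in \<phi> (fst p) + snd p * \<alpha>)" for w
  have peq: "\<phi>' (vadd t (vsc c e)) = \<phi> t + c * \<alpha>" if "t \<in> L" for t c
  proof -
    let ?P = "\<lambda>p. fst p \<in> L \<and> vadd t (vsc c e) = vadd (fst p) (vsc (snd p) e)"
    have "?P (t, c)" using that by simp
    then have P: "?P (SOME p. ?P p)" by (rule someI)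
    define p where "p = (SOME p. ?P p)"
    have Pp: "fst p \<in> L \<and> vadd t (vsc c e) = vadd (fst p) (vsc (snd p) e)" unfolding p_def by (rule P)
    have tc0: "t = fst p \<and> c = snd p" by (rule uniq[OF that conjunct1[OF Pp] conjunct2[OF Pp]])
    have tc: "fst p = t" "snd p = c" using conjunct1[OF tc0, symmetric] conjunct2[OF tc0, symmetric] by blast+
    have "\<phi>' (vadd t (vsc c e)) = \<phi> (fst p) + snd p * \<alpha>" unfolding \<phi>'_def p_def Let_def by (rule refl)
    then show ?thesis unfolding tc .
  qed
  have L'I: "vadd t (vsc c e) \<in> L'" if "t \<in> L" for t c unfolding L'_def using that by blast
  have L'E: "\<exists>t c. t \<in> L \<and> a = vadd t (vsc c e)" if "a \<in> L'" for a using that unfolding L'_def by blast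
  have good': "good G c0 L' \<phi>'"
    unfolding good_def
  proof (intro conjI ballI allI)
    show "(\<lambda>x. 0) \<in> L'" using L'I[OF z, of 0] unfolding zadd .
  next
    fix a b assume "a \<in> L'" "b \<in> L'"
    then obtain t1 c1 t2 c2 where t: "t1 \<in> L" "t2 \<in> L" and ab: "a = vadd t1 (vsc c1 e)" "b = vadd t2 (vsc c2 e)"
      using L'E by meson
    have eq: "vadd a b = vadd (vadd t1 t2) (vsc (c1 + c2) e)"
      unfolding ab vadd_def vsc_def by (rule ext) (simp add: algebra_simps)
    have tt: "vadd t1 t2 \<in> L" "\<phi> (vadd t1 t2) = \<phi> t1 + \<phi> t2" using add[OF t] by auto
    show "vadd a b \<in> L'" unfolding eq by (rule L'I[OF tt(1)])
    have "\<phi>' (vadd a b) = \<phi> t1 + \<phi> t2 + (c1 + c2) * \<alpha>" unfolding eq peq[OF tt(1)] tt(2) ..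
    also have "\<dots> = \<phi>' a + \<phi>' b" unfolding ab peq[OF t(1)] peq[OF t(2)] by (simp add: algebra_simps)
    finally show "\<phi>' (vadd a b) = \<phi>' a + \<phi>' b" .
  next
    fix a k assume "a \<in> L'"
    then obtain t c where t: "t \<in> L" and ab: "a = vadd t (vsc c e)"
      using L'E by meson
    have eq: "vsc k a = vadd (vsc k t) (vsc (k * c) e)"
      unfolding ab vadd_def vsc_def by (rule ext) (simp add: algebra_simps)
    have tt: "vsc k t \<in> L" "\<phi> (vsc k t) = k * \<phi> t" using sc[OF t] by auto
    show "vsc k a \<in> L'" unfolding eq by (rule L'I[OF tt(1)])
    have "\<phi>' (vsc k a) = k * \<phi> t + (k * c) * \<alpha>" unfolding eq peq[OF tt(1)] tt(2) ..
    also have "\<dots> = k * \<phi>' a" unfolding ab peq[OF t] by (simp add: algebra_simps)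
    finally show "\<phi>' (vsc k a) = k * \<phi>' a" .
  next
    fix a assume "a \<in> L'"
    then obtain t c where t: "t \<in> L" and ab: "a = vadd t (vsc c e)"
      using L'E by meson
    have "\<phi> t + c * \<alpha> + c0 \<le> G (vadd t (vsc c e))"
    proof (cases c "0::real" rule: linorder_cases)
      case less
      then have "(\<phi> t + c0 - G (vadd t (vsc (-(-c)) e))) / (-c) \<in> Lo"
        unfolding Lo_def using t by (intro CollectI exI[of _ t] exI[of _ "-c"]) auto
      then have "(\<phi> t + c0 - G (vadd t (vsc c e))) / (-c) \<le> \<alpha>" using al1 by simp
      then show ?thesis using less by (simp add: field_simps)
    next
      case equal then show ?thesis using dom t zadd by simp
    next
      case greater
      then have "(G (vadd t (vsc c e)) - c0 - \<phi> t) / c \<in> U"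
        unfolding U_def using t by blast
      then have "\<alpha> \<le> (G (vadd t (vsc c e)) - c0 - \<phi> t) / c" using al2 by simp
      then show ?thesis using greater by (simp add: field_simps)
    qed
    then show "\<phi>' a + c0 \<le> G a" unfolding ab peq[OF t] .
  qed
  have "L \<subseteq> L'"
  proof
    fix t assume "t \<in> L" then show "t \<in> L'" using L'I[of t 0] unfolding zadd by simp
  qed
  moreover have "e \<in> L'"
  proof -
    have "vadd (\<lambda>x. 0) (vsc 1 e) = e" unfolding vadd_def vsc_def by simp
    then show ?thesis using L'I[OF z, of 1] by simp
  qed
  moreover have "\<forall>a\<in>L. \<phi>' a = \<phi> a"
  proof
    fix t assume "t \<in> L" then show "\<phi>' t = \<phi> t" using peq[of t 0] unfolding zadd by simp
  qed
  ultimately have "good G c0 L' \<phi>' \<and> L \<subseteq> L' \<and> e \<in> L' \<and> (\<forall>a\<in>L. \<phi>' a = \<phi> a)"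
    using good' by (intro conjI) auto
  then show ?thesis by (intro exI[of _ L'] exI[of _ \<phi>'])
qed

lemma good_zero: "good G c0 L \<phi> \<Longrightarrow> (\<lambda>x. 0) \<in> L"
  unfolding good_def by (elim conjE)
lemma good_add: "good G c0 L \<phi> \<Longrightarrow> a \<in> L \<Longrightarrow> b \<in> L \<Longrightarrow> vadd a b \<in> L \<and> \<phi> (vadd a b) = \<phi> a + \<phi> b"
  unfolding good_def by (elim conjE) (drule bspec, assumption, drule bspec, assumption)
lemma good_sc: "good G c0 L \<phi> \<Longrightarrow> a \<in> L \<Longrightarrow> vsc c a \<in> L \<and> \<phi> (vsc c a) = c * \<phi> a"
  unfolding good_def by (elim conjE) (drule bspec, assumption, erule allE)

lemma hb_finite:
  assumes "finite E" "cvx G" "good G c0 L \<phi>"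
  shows "\<exists>L' \<phi>'. good G c0 L' \<phi>' \<and> L \<subseteq> L' \<and> E \<subseteq> L' \<and> (\<forall>a\<in>L. \<phi>' a = \<phi> a)"
  using assms(1)
proof (induction E rule: finite_induct)
  case empty then show ?case using assms(3) by (intro exI[of _ L] exI[of _ \<phi>]) simp
next
  case (insert e E)
  from insert.IH obtain L1 \<phi>1 where 1: "good G c0 L1 \<phi>1 \<and> L \<subseteq> L1 \<and> E \<subseteq> L1 \<and> (\<forall>a\<in>L. \<phi>1 a = \<phi> a)"
    by (elim exE)
  from hb_step[OF assms(2) conjunct1[OF 1], of e] obtain L2 \<phi>2 where
    2: "good G c0 L2 \<phi>2 \<and> L1 \<subseteq> L2 \<and> e \<in> L2 \<and> (\<forall>a\<in>L1. \<phi>2 a = \<phi>1 a)" by (elim exE)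
  have "good G c0 L2 \<phi>2 \<and> L \<subseteq> L2 \<and> insert e E \<subseteq> L2 \<and> (\<forall>a\<in>L. \<phi>2 a = \<phi> a)"
  proof (intro conjI)
    show "good G c0 L2 \<phi>2" using 2 by simp
    show "L \<subseteq> L2" using 1 2 by blast
    show "insert e E \<subseteq> L2" using 1 2 by blast
    show "\<forall>a\<in>L. \<phi>2 a = \<phi> a" using 1 2 by (simp add: subset_iff)
  qed
  then show ?case by (intro exI[of _ L2] exI[of _ \<phi>2])
qed

lemma good_sum:
  assumes "good G c0 L \<phi>" "finite A" "\<forall>y\<in>A. f y \<in> L"
  shows "(\<lambda>x. \<Sum>y\<in>A. f y x) \<in> L \<and> \<phi> (\<lambda>x. \<Sum>y\<in>A. f y x) = (\<Sum>y\<in>A. \<phi> (f y))"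
  using assms(2,3)
proof (induction A rule: finite_induct)
  case empty
  have z: "(\<lambda>x. 0::real) \<in> L" using good_zero[OF assms(1)] .
  have v0: "vsc 0 (\<lambda>x. 0::real) = (\<lambda>x. 0)" unfolding vsc_def by simp
  have "\<phi> (vsc 0 (\<lambda>x. 0)) = 0" using good_sc[OF assms(1) z, of 0] by simp
  then have "\<phi> (\<lambda>x. 0) = 0" unfolding v0 .
  then show ?case using z by simp
next
  case (insert y A)
  have eq: "(\<lambda>x. \<Sum>y\<in>insert y A. f y x) = vadd (f y) (\<lambda>x. \<Sum>y\<in>A. f y x)"
    unfolding vadd_def using insert by simp
  have fy: "f y \<in> L" using insert by simp
  have IH: "(\<lambda>x. \<Sum>y\<in>A. f y x) \<in> L \<and> \<phi> (\<lambda>x. \<Sum>y\<in>A. f y x) = (\<Sum>y\<in>A. \<phi> (f y))"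
    using insert by simp
  show ?case unfolding eq using good_add[OF assms(1) fy conjunct1[OF IH]] IH insert(1,2) by simp
qed



lemma G_cong:
  assumes "\<And>y. y \<in> Ys \<Longrightarrow> s y = s' y"
  shows "F_Delta M Z eps Ys s = F_Delta M Z eps Ys s'"
proof -
  have "\<And>\<omega>. (\<lambda>y. s y + eps * (Z \<omega> \<bullet> y)) ` Ys = (\<lambda>y. s' y + eps * (Z \<omega> \<bullet> y)) ` Ys"
    using assms by (intro image_cong) auto
  then show ?thesis unfolding F_Delta_def by simp
qed

lemma FC_eq: "F_C M Z eps Ys \<theta> = F_Delta M Z eps Ys (\<lambda>y. \<theta> \<bullet> y)"
  unfolding F_C_def F_Delta_def by (simp add: inner_add_left)

lemma integrable_G:
  assumes "prob_space M" "integrable M Z" "finite Ys" "Ys \<noteq> {}"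
  shows "integrable M (\<lambda>\<omega>. Max ((\<lambda>y. s y + eps * (Z \<omega> \<bullet> y)) ` Ys))"
proof -
  interpret prob_space M by (rule assms(1))
  have Zm: "Z \<in> borel_measurable M" using assms(2) by (rule borel_measurable_integrable)
  have int1: "integrable M (\<lambda>\<omega>. \<Sum>y\<in>Ys. \<bar>s y + eps * (Z \<omega> \<bullet> y)\<bar>)"
  proof (rule Bochner_Integration.integrable_sum)
    fix y
    have "integrable M (\<lambda>\<omega>. s y + eps * (Z \<omega> \<bullet> y))"
    proof (rule Bochner_Integration.integrable_add)
      show "integrable M (\<lambda>\<omega>. s y)" by simp
      show "integrable M (\<lambda>\<omega>. eps * (Z \<omega> \<bullet> y))"
        by (rule Bochner_Integration.integrable_mult_right, rule Bochner_Integration.integrable_inner_left, rule assms(2))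
    qed
    then show "integrable M (\<lambda>\<omega>. \<bar>s y + eps * (Z \<omega> \<bullet> y)\<bar>)" by (rule Bochner_Integration.integrable_abs)
  qed
  show ?thesis
  proof (rule Bochner_Integration.integrable_bound[OF int1])
    show "(\<lambda>\<omega>. Max ((\<lambda>y. s y + eps * (Z \<omega> \<bullet> y)) ` Ys)) \<in> borel_measurable M"
      using Zm assms(3) by (intro borel_measurable_Max) auto
    show "AE \<omega> in M. norm (Max ((\<lambda>y. s y + eps * (Z \<omega> \<bullet> y)) ` Ys)) \<le> norm (\<Sum>y\<in>Ys. \<bar>s y + eps * (Z \<omega> \<bullet> y)\<bar>)"
    proof (rule AE_I2)
      fix \<omega>
      have mi: "Max ((\<lambda>y. s y + eps * (Z \<omega> \<bullet> y)) ` Ys) \<in> (\<lambda>y. s y + eps * (Z \<omega> \<bullet> y)) ` Ys"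
        using assms(3,4) by (intro Max_in) auto
      then obtain y0 where y0: "y0 \<in> Ys" "Max ((\<lambda>y. s y + eps * (Z \<omega> \<bullet> y)) ` Ys) = s y0 + eps * (Z \<omega> \<bullet> y0)"
        by (elim imageE) simp
      have "\<bar>s y0 + eps * (Z \<omega> \<bullet> y0)\<bar> \<le> (\<Sum>y\<in>Ys. \<bar>s y + eps * (Z \<omega> \<bullet> y)\<bar>)"
        using y0(1) assms(3) by (intro member_le_sum) auto
      then show "norm (Max ((\<lambda>y. s y + eps * (Z \<omega> \<bullet> y)) ` Ys)) \<le> norm (\<Sum>y\<in>Ys. \<bar>s y + eps * (Z \<omega> \<bullet> y)\<bar>)"
        using y0(2) by (simp add: sum_nonneg)
    qed
  qed
qed

lemma cvx_G:
  assumes "prob_space M" "integrable M Z" "finite Ys" "Ys \<noteq> {}"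
  shows "cvx (F_Delta M Z eps Ys)"
  unfolding cvx_def
proof (intro allI impI)
  fix a b and u :: real
  assume u: "0 \<le> u" "u \<le> 1"
  let ?A = "\<lambda>\<omega>. Max ((\<lambda>y. a y + eps * (Z \<omega> \<bullet> y)) ` Ys)"
  let ?B = "\<lambda>\<omega>. Max ((\<lambda>y. b y + eps * (Z \<omega> \<bullet> y)) ` Ys)"
  let ?C = "\<lambda>\<omega>. Max ((\<lambda>y. vadd (vsc u a) (vsc (1-u) b) y + eps * (Z \<omega> \<bullet> y)) ` Ys)"
  have iA: "integrable M ?A" and iB: "integrable M ?B" and iC: "integrable M ?C"
    using integrable_G[OF assms] by blast+
  have pw: "?C \<omega> \<le> u * ?A \<omega> + (1 - u) * ?B \<omega>" for \<omega>
  proof -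
    have "vadd (vsc u a) (vsc (1-u) b) y + eps * (Z \<omega> \<bullet> y) \<le> u * ?A \<omega> + (1 - u) * ?B \<omega>" if y: "y \<in> Ys" for y
    proof -
      have "a y + eps * (Z \<omega> \<bullet> y) \<le> ?A \<omega>" using y assms(3) by (intro Max_ge) auto
      then have 1: "u * (a y + eps * (Z \<omega> \<bullet> y)) \<le> u * ?A \<omega>" using u by (intro mult_left_mono) auto
      have "b y + eps * (Z \<omega> \<bullet> y) \<le> ?B \<omega>" using y assms(3) by (intro Max_ge) auto
      then have 2: "(1 - u) * (b y + eps * (Z \<omega> \<bullet> y)) \<le> (1 - u) * ?B \<omega>" using u by (intro mult_left_mono) auto
      have "vadd (vsc u a) (vsc (1-u) b) y + eps * (Z \<omega> \<bullet> y) = u * (a y + eps * (Z \<omega> \<bullet> y)) + (1 - u) * (b y + eps * (Z \<omega> \<bullet> y))"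
        unfolding vadd_def vsc_def by (simp add: algebra_simps)
      then show ?thesis using 1 2 by linarith
    qed
    then show ?thesis using assms(3,4) by (subst Max_le_iff) auto
  qed
  have "F_Delta M Z eps Ys (vadd (vsc u a) (vsc (1-u) b)) = integral\<^sup>L M ?C" unfolding F_Delta_def by simp
  also have "\<dots> \<le> integral\<^sup>L M (\<lambda>\<omega>. u * ?A \<omega> + (1 - u) * ?B \<omega>)"
    using iA iB iC pw by (intro integral_mono) auto
  also have "\<dots> = u * integral\<^sup>L M ?A + (1 - u) * integral\<^sup>L M ?B"
    using iA iB by simp
  also have "\<dots> = u * F_Delta M Z eps Ys a + (1 - u) * F_Delta M Z eps Ys b" unfolding F_Delta_def by simp
  finally show "F_Delta M Z eps Ys (vadd (vsc u a) (vsc (1-u) b)) \<le> u * F_Delta M Z eps Ys a + (1 - u) * F_Delta M Z eps Ys b" .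
qed

lemma delta_sum:
  assumes "finite Ys"
  shows "(\<Sum>y\<in>Ys. vsc (g y) (\<lambda>x. if x = y then 1 else 0) x) = (if x \<in> Ys then g x else (0::real))"
proof -
  have "(\<Sum>y\<in>Ys. vsc (g y) (\<lambda>x. if x = y then 1 else 0) x) = (\<Sum>y\<in>Ys. if x = y then g y else 0)"
    unfolding vsc_def by (intro sum.cong) auto
  also have "\<dots> = (if x \<in> Ys then g x else 0)" using assms by (simp add: sum.delta)
  finally show ?thesis .
qed

theorem proposition8:
  fixes M :: "'a measure" and Z :: "'a \<Rightarrow> real^'d" and Ys :: "(real^'d) set"
    and eps :: real and f :: "real^'d \<Rightarrow> real" and \<mu> :: "real^'d"
  assumes "finite Ys" and "Ys \<noteq> {}"
    and "\<And>y. y \<in> Ys \<Longrightarrow> y \<notin> convex hull (Ys - {y})"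
    and "eps > 0"
    and "prob_space M"
    and "f \<in> borel_measurable borel" and "\<And>z. f z > 0"
    and "distributed M lborel Z (\<lambda>z. ennreal (f z))"
    and "integrable M Z"
    and "prob_space.expectation M Z = 0"
  shows "conj_vec (F_C M Z eps Ys) \<mu>
           = (INF q \<in> {q. Ymat Ys q = \<mu>}. conj_fun Ys (F_Delta M Z eps Ys) q)"
proof (rule antisym)
  let ?G = "F_Delta M Z eps Ys"
  let ?C = "conj_vec (F_C M Z eps Ys) \<mu>"
  have fin: "finite Ys" and ne: "Ys \<noteq> {}" using assms by auto
  show "?C \<le> (INF q \<in> {q. Ymat Ys q = \<mu>}. conj_fun Ys ?G q)"
  proof (rule INF_greatest)
    fix q assume "q \<in> {q. Ymat Ys q = \<mu>}"
    then have q: "Ymat Ys q = \<mu>" by simp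
    show "?C \<le> conj_fun Ys ?G q"
      unfolding conj_vec_def
    proof (rule SUP_least)
      fix \<theta> :: "real^'d"
      have "\<theta> \<bullet> \<mu> = (\<Sum>y\<in>Ys. (\<theta> \<bullet> y) * q y)"
        unfolding q[symmetric] Ymat_def by (simp add: inner_sum_right mult.commute)
      then have "\<theta> \<bullet> \<mu> - F_C M Z eps Ys \<theta> = (\<Sum>y\<in>Ys. (\<lambda>y. \<theta> \<bullet> y) y * q y) - ?G (\<lambda>y. \<theta> \<bullet> y)"
        unfolding FC_eq by simp
      then show "ereal (\<theta> \<bullet> \<mu> - F_C M Z eps Ys \<theta>) \<le> conj_fun Ys ?G q"
        unfolding conj_fun_def by (intro SUP_upper2[of "\<lambda>y. \<theta> \<bullet> y"]) auto
    qed
  qed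
  show "(INF q \<in> {q. Ymat Ys q = \<mu>}. conj_fun Ys ?G q) \<le> ?C"
  proof (cases ?C)
    case PInf then show ?thesis by simp
  next
    case MInf
    have "ereal (0 \<bullet> \<mu> - F_C M Z eps Ys 0) \<le> ?C" unfolding conj_vec_def by (rule SUP_upper) simp
    then show ?thesis using MInf by simp
  next
    case (real v)
    define r where "r \<theta> = (\<lambda>x. if x \<in> Ys then \<theta> \<bullet> x else 0)" for \<theta> :: "real^'d"
    have Gr: "?G (r \<theta>) = F_C M Z eps Ys \<theta>" for \<theta>
      unfolding FC_eq r_def by (rule G_cong) simp
    have bound: "\<theta> \<bullet> \<mu> - ?G (r \<theta>) \<le> v" for \<theta>
    proof -
      have "ereal (\<theta> \<bullet> \<mu> - F_C M Z eps Ys \<theta>) \<le> ?C" unfolding conj_vec_def by (rule SUP_upper) simp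
      then show ?thesis using real Gr by simp
    qed
    have G0: "?G (r \<theta>) = ?G (\<lambda>x. 0)" if "\<forall>y\<in>Ys. \<theta> \<bullet> y = 0" for \<theta>
      unfolding r_def using that by (intro G_cong) simp
    have wd: "\<theta>1 \<bullet> \<mu> = \<theta>2 \<bullet> \<mu>" if "r \<theta>1 = r \<theta>2" for \<theta>1 \<theta>2
    proof -
      define d where "d = \<theta>1 - \<theta>2"
      have dz: "\<forall>y\<in>Ys. (c *\<^sub>R d) \<bullet> y = 0" for c
      proof
        fix y assume y: "y \<in> Ys"
        have "r \<theta>1 y = r \<theta>2 y" using that by simp
        then have "\<theta>1 \<bullet> y = \<theta>2 \<bullet> y" using y unfolding r_def by simp
        then show "(c *\<^sub>R d) \<bullet> y = 0" unfolding d_def by (simp add: inner_diff_left)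
      qed
      have cb: "c * (d \<bullet> \<mu>) \<le> v + ?G (\<lambda>x. 0)" for c
        using bound[of "c *\<^sub>R d"] G0[OF dz[of c]] by simp
      have "d \<bullet> \<mu> = 0"
      proof (rule ccontr)
        assume nz: "d \<bullet> \<mu> \<noteq> 0"
        have "(v + ?G (\<lambda>x. 0) + 1) / (d \<bullet> \<mu>) * (d \<bullet> \<mu>) = v + ?G (\<lambda>x. 0) + 1" using nz by simp
        then show False using cb[of "(v + ?G (\<lambda>x. 0) + 1) / (d \<bullet> \<mu>)"] by simp
      qed
      then show ?thesis unfolding d_def by (simp add: inner_diff_left)
    qed
    define L0 where "L0 = range r"
    define \<phi>0 where "\<phi>0 w = (SOME \<theta>. w = r \<theta>) \<bullet> \<mu>" for w
    have \<phi>0r: "\<phi>0 (r \<theta>) = \<theta> \<bullet> \<mu>" for \<theta>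
    proof -
      have "r \<theta> = r (SOME \<theta>'. r \<theta> = r \<theta>')" by (rule someI) (rule refl)
      then show ?thesis unfolding \<phi>0_def by (metis wd)
    qed
    have radd: "vadd (r a) (r b) = r (a + b)" for a b
      unfolding vadd_def r_def by (rule ext) (simp add: inner_add_left)
    have rsc: "vsc c (r a) = r (c *\<^sub>R a)" for c a
      unfolding vsc_def r_def by (rule ext) simp
    have r0: "r 0 = (\<lambda>x. 0)" unfolding r_def by (rule ext) simp
    have good0: "good ?G (-v) L0 \<phi>0"
      unfolding good_def L0_def
    proof (intro conjI ballI allI)
      show "(\<lambda>x. 0) \<in> range r" using r0 by (metis rangeI)
    next
      fix a b assume "a \<in> range r" "b \<in> range r"
      then obtain ta tb where ab: "a = r ta" "b = r tb" by blast
      show "vadd a b \<in> range r" unfolding ab radd by simp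
      show "\<phi>0 (vadd a b) = \<phi>0 a + \<phi>0 b" unfolding ab radd \<phi>0r by (simp add: inner_add_left)
    next
      fix a c assume "a \<in> range r"
      then obtain ta where ab: "a = r ta" by blast
      show "vsc c a \<in> range r" unfolding ab rsc by simp
      show "\<phi>0 (vsc c a) = c * \<phi>0 a" unfolding ab rsc \<phi>0r by simp
    next
      fix a assume "a \<in> range r"
      then obtain ta where ab: "a = r ta" by blast
      show "\<phi>0 a + - v \<le> ?G a" unfolding ab \<phi>0r using bound[of ta] by simp
    qed
    define \<delta> where "\<delta> y = (\<lambda>x. if x = y then 1 else (0::real))" for y :: "real^'d"
    have cv: "cvx ?G" by (rule cvx_G[OF assms(5,9) fin ne])
    obtain L' \<phi>' where H: "good ?G (-v) L' \<phi>' \<and> L0 \<subseteq> L' \<and> \<delta> ` Ys \<subseteq> L' \<and> (\<forall>a\<in>L0. \<phi>' a = \<phi>0 a)"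
      using hb_finite[OF finite_imageI[OF fin, of \<delta>] cv good0] by (elim exE)
    have gd: "good ?G (-v) L' \<phi>'" using H by simp
    have dL: "\<delta> y \<in> L'" if "y \<in> Ys" for y using H that by blast
    define q where "q y = \<phi>' (\<delta> y)" for y
    have expand: "(\<lambda>x. \<Sum>y\<in>Ys. vsc (g y) (\<delta> y) x) \<in> L' \<and> \<phi>' (\<lambda>x. \<Sum>y\<in>Ys. vsc (g y) (\<delta> y) x) = (\<Sum>y\<in>Ys. g y * q y)" for g
    proof -
      have "\<forall>y\<in>Ys. vsc (g y) (\<delta> y) \<in> L'" using good_sc[OF gd dL] by blast
      from good_sum[OF gd fin this]
      have "(\<lambda>x. \<Sum>y\<in>Ys. vsc (g y) (\<delta> y) x) \<in> L' \<and> \<phi>' (\<lambda>x. \<Sum>y\<in>Ys. vsc (g y) (\<delta> y) x) = (\<Sum>y\<in>Ys. \<phi>' (vsc (g y) (\<delta> y)))" .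
      moreover have "(\<Sum>y\<in>Ys. \<phi>' (vsc (g y) (\<delta> y))) = (\<Sum>y\<in>Ys. g y * q y)"
        unfolding q_def using good_sc[OF gd dL] by (intro sum.cong) auto
      ultimately show ?thesis by simp
    qed
    have eqfun: "(\<lambda>x. \<Sum>y\<in>Ys. vsc (g y) (\<delta> y) x) = (\<lambda>x. if x \<in> Ys then g x else 0)" for g
      unfolding \<delta>_def using delta_sum[OF fin] by (intro ext) blast
    have A: "(\<Sum>y\<in>Ys. s y * q y) - ?G s \<le> v" for s
    proof -
      have "\<phi>' (\<lambda>x. \<Sum>y\<in>Ys. vsc (s y) (\<delta> y) x) + - v \<le> ?G (\<lambda>x. \<Sum>y\<in>Ys. vsc (s y) (\<delta> y) x)"
        using gd expand[of s] unfolding good_def by blast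
      moreover have "?G (\<lambda>x. \<Sum>y\<in>Ys. vsc (s y) (\<delta> y) x) = ?G s"
        unfolding eqfun by (rule G_cong) simp
      ultimately show ?thesis using expand[of s] by simp
    qed
    have B: "Ymat Ys q = \<mu>"
    proof -
      have th: "\<theta> \<bullet> Ymat Ys q = \<theta> \<bullet> \<mu>" for \<theta>
      proof -
        have rr: "r \<theta> = (\<lambda>x. \<Sum>y\<in>Ys. vsc (\<theta> \<bullet> y) (\<delta> y) x)" unfolding eqfun r_def ..
        have "\<theta> \<bullet> Ymat Ys q = (\<Sum>y\<in>Ys. (\<theta> \<bullet> y) * q y)"
          unfolding Ymat_def by (simp add: inner_sum_right mult.commute)
        also have "\<dots> = \<phi>' (r \<theta>)" unfolding rr using expand[of "\<lambda>y. \<theta> \<bullet> y"] by simp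
        also have "\<dots> = \<phi>0 (r \<theta>)" using H unfolding L0_def by simp
        also have "\<dots> = \<theta> \<bullet> \<mu>" by (rule \<phi>0r)
        finally show ?thesis .
      qed
      have "(Ymat Ys q - \<mu>) \<bullet> (Ymat Ys q - \<mu>) = 0"
        using th[of "Ymat Ys q - \<mu>"] by (simp add: inner_diff_right)
      then show ?thesis by simp
    qed
    have "conj_fun Ys ?G q \<le> ereal v"
      unfolding conj_fun_def using A by (intro SUP_least) simp
    moreover have "(INF q \<in> {q. Ymat Ys q = \<mu>}. conj_fun Ys ?G q) \<le> conj_fun Ys ?G q"
      using B by (intro INF_lower) simp
    ultimately show ?thesis using real by simp
  qed
qed

end
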